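(* Let $\sigma=\sigma^0\sigma^1\sigma^2\in\{+,-\}^3$ and let $\sigma_r=\sigma^2\sigma^1\sigma^0$ be its reverse. For every integer $n\geq 1$, $L_3^*(n;\sigma)=L_3^*(n;\sigma_r)$.
   Context: A word of length $m$ on $k$ letters is $s=s_1\cdots s_m$ with $s_j\in\{0,\dots,k-1\}$; primitive means not of the form $q^r$ (concatenation of $r$ copies of $q$) with $r>1$. Necklaces are equivalence classes of words under cyclic rotation, primitive if their representatives are. $L_k(m)$ is the number of primitive necklaces of length $m$ on $k$ letters. For $\sigma\in\{+,-\}^k$ let $T_\sigma^-=\{i:\sigma^i=-\}$ and $o_\sigma(s)=|\{j:s_j\in T_\sigma^-\}|$. $L_k(m;\sigma)$ is the number of primitive necklaces of length $m$ on $k$ letters whose representatives $s$ have $o_\sigma(s)$ odd, with $L_k(m;\sigma)=0$ if $m$ is not an integer, and $L_k^*(n;\sigma)=L_k(n)+L_k(\tfrac n2;\sigma)$. *)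

theory Defs
  imports Main
begin

datatype sign = Plus | Minus

definition words :: "nat \<Rightarrow> nat \<Rightarrow> nat list set" where
  "words k m = {s. length s = m \<and> set s \<subseteq> {0..<k}}"

definition primitive :: "nat list \<Rightarrow> bool" where
  "primitive s \<longleftrightarrow> \<not> (\<exists>q r. r > 1 \<and> s = concat (replicate r q))"

definition necklace :: "nat list \<Rightarrow> nat list set" where
  "necklace s = {rotate i s | i. True}"

definition prim_necklaces :: "nat \<Rightarrow> nat \<Rightarrow> nat list set set" where
  "prim_necklaces k m = necklace ` {s \<in> words k m. primitive s}"

definition L :: "nat \<Rightarrow> nat \<Rightarrow> nat" where
  "L k m = card (prim_necklaces k m)"

definition o_sig :: "sign list \<Rightarrow> nat list \<Rightarrow> nat" where
  "o_sig \<sigma> s = length (filter (\<lambda>c. \<sigma> ! c = Minus) s)"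

definition L_sig :: "nat \<Rightarrow> nat \<Rightarrow> sign list \<Rightarrow> nat" where
  "L_sig k m \<sigma> = card {N \<in> prim_necklaces k m. \<forall>s\<in>N. odd (o_sig \<sigma> s)}"

definition L_star :: "nat \<Rightarrow> nat \<Rightarrow> sign list \<Rightarrow> nat" where
  "L_star k n \<sigma> = L k n + (if even n then L_sig k (n div 2) \<sigma> else 0)"

end

theory Submission
  imports Defs
begin

definition gmap :: "nat list \<Rightarrow> nat list" where
  "gmap s = map (\<lambda>c. 2 - c) s"

lemma gg: "set s \<subseteq> {0..<3} \<Longrightarrow> gmap (gmap s) = s"
  unfolding gmap_def by (induction s) auto

lemma g_set: "set s \<subseteq> {0..<3} \<Longrightarrow> set (gmap s) \<subseteq> {0..<3}"
  unfolding gmap_def by auto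

lemma g_rot: "gmap (rotate i s) = rotate i (gmap s)"
  unfolding gmap_def by (simp add: rotate_map)

lemma g_neck: "necklace (gmap s) = gmap ` necklace s"
  unfolding necklace_def by (auto simp: g_rot) (metis (mono_tags, lifting) g_rot mem_Collect_eq rev_image_eqI)

lemma g_prim: assumes "set s \<subseteq> {0..<3}" "primitive s" shows "primitive (gmap s)"
  unfolding primitive_def
proof
  assume "\<exists>q r. r > 1 \<and> gmap s = concat (replicate r q)"
  then obtain q r where "r > 1" "gmap s = concat (replicate r q)" by blast
  then have "s = concat (replicate r (gmap q))"
    using gg[OF assms(1)] by (metis gmap_def map_concat map_replicate)
  with \<open>r>1\<close> assms(2) show False unfolding primitive_def by blast
qed

lemma g_osig: assumes "length \<sigma> = 3" "set s \<subseteq> {0..<3}"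
  shows "o_sig (rev \<sigma>) (gmap s) = o_sig \<sigma> s"
proof -
  have "\<And>c. c \<in> set s \<Longrightarrow> (rev \<sigma> ! (2 - c) = Minus) = (\<sigma> ! c = Minus)"
  proof -
    fix c assume "c \<in> set s"
    then have "c < 3" using assms(2) by auto
    then show "(rev \<sigma> ! (2 - c) = Minus) = (\<sigma> ! c = Minus)"
      using assms(1) by (simp add: rev_nth)
  qed
  then have "filter ((\<lambda>c. rev \<sigma> ! c = Minus) \<circ> (\<lambda>c. 2 - c)) s = filter (\<lambda>c. \<sigma> ! c = Minus) s"
    by (intro filter_cong) auto
  then show ?thesis unfolding o_sig_def gmap_def by (simp add: filter_map)
qed

definition A :: "nat \<Rightarrow> sign list \<Rightarrow> nat list set set" where
  "A m \<sigma> = {N \<in> prim_necklaces 3 m. \<forall>s\<in>N. odd (o_sig \<sigma> s)}"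

lemma neck_set: "s' \<in> necklace s \<Longrightarrow> set s \<subseteq> {0..<3} \<Longrightarrow> set s' \<subseteq> {0..<3}"
  unfolding necklace_def by auto

lemma maps: assumes "length \<sigma> = 3" "N \<in> A m \<sigma>"
  shows "gmap ` N \<in> A m (rev \<sigma>)" "gmap ` gmap ` N = N"
proof -
  obtain s where s: "s \<in> words 3 m" "primitive s" "N = necklace s"
    using assms(2) unfolding A_def prim_necklaces_def by auto
  have ss: "set s \<subseteq> {0..<3}" "length s = m" using s(1) unfolding words_def by auto
  have el: "\<And>t. t \<in> N \<Longrightarrow> set t \<subseteq> {0..<3}" using neck_set ss s(3) by blast
  have "gmap ` N = necklace (gmap s)" using s(3) g_neck by simp
  moreover have "gmap s \<in> words 3 m" using ss g_set unfolding words_def gmap_def by auto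
  moreover have "primitive (gmap s)" using g_prim ss s by blast
  ultimately have "gmap ` N \<in> prim_necklaces 3 m" unfolding prim_necklaces_def by blast
  moreover have "\<forall>t\<in>gmap ` N. odd (o_sig (rev \<sigma>) t)"
    using assms g_osig el unfolding A_def by auto
  ultimately show "gmap ` N \<in> A m (rev \<sigma>)" unfolding A_def by blast
  show "gmap ` gmap ` N = N"
  proof -
    have "gmap ` gmap ` N = (\<lambda>t. gmap (gmap t)) ` N" by (simp add: image_image)
    also have "\<dots> = id ` N" using el gg by (intro image_cong) auto
    finally show ?thesis by simp
  qed
qed

lemma Lsig_rev: assumes "length \<sigma> = 3" shows "L_sig 3 m \<sigma> = L_sig 3 m (rev \<sigma>)"
proof -
  have l2: "length (rev \<sigma>) = 3" using assms by simp
  have "bij_betw (\<lambda>N. gmap ` N) (A m \<sigma>) (A m (rev \<sigma>))"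
    apply (rule bij_betw_byWitness[where f'="\<lambda>N. gmap ` N"])
    using maps[OF assms] maps[OF l2] by auto
  then have "card (A m \<sigma>) = card (A m (rev \<sigma>))" by (rule bij_betw_same_card)
  then show ?thesis unfolding L_sig_def A_def .
qed

theorem lemma2p3:
  fixes \<sigma> :: "sign list" and n :: nat
  assumes "length \<sigma> = 3" and "n \<ge> 1"
  shows "L_star 3 n \<sigma> = L_star 3 n (rev \<sigma>)"
  unfolding L_star_def using Lsig_rev[OF assms(1)] by simp

end
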